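(* Let $0<\alpha<1$ and $\lambda>0$, and let $\{M_{\alpha,\lambda}(t)\}_{t\ge0}$ be a Lévy process whose marginals have Laplace transform $\mathbb{E}\, e^{-uM_{\alpha,\lambda}(t)}=\left(\frac{\lambda}{\lambda+u^{\alpha}}\right)^{t}$ for $u\ge 0$, $t\ge 0$. Let $S_\alpha(1)$ be a positive random variable with $\mathbb{E}\,e^{-uS_\alpha(1)}=e^{-u^\alpha}$, $u\ge0$. Then $$\frac{\lambda^{1/\alpha}M_{\alpha,\lambda}(t)}{t^{1/\alpha}}\ \xrightarrow{d}\ S_\alpha(1)\qquad\text{as } t\to\infty.$$
   Context: Such a process (the Mittag-Leffler Lévy process) can be realized as $M_{\alpha,\lambda}(t)=S_\alpha(G_{\lambda,1}(t))$, where $S_\alpha$ is an $\alpha$-stable subordinator with $\mathbb{E}e^{-uS_\alpha(t)}=e^{-tu^\alpha}$ and $G_{\lambda,1}$ is an independent gamma Lévy process with $G_{\lambda,1}(t)$ having density $\frac{\lambda^{t}}{\Gamma(t)}y^{t-1}e^{-\lambda y}$, $y>0$. *)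

theory Defs
  imports "HOL-Probability.Probability"
begin

definition levy_process :: "'a measure \<Rightarrow> (real \<Rightarrow> 'a \<Rightarrow> real) \<Rightarrow> bool" where
  "levy_process M X \<longleftrightarrow>
     prob_space M \<and>
     (\<forall>t\<ge>0. X t \<in> borel_measurable M) \<and>
     (AE \<omega> in M. X 0 \<omega> = 0) \<and>
     (\<forall>(n::nat) (ts::nat \<Rightarrow> real). 0 \<le> ts 0 \<and> (\<forall>i<n. ts i \<le> ts (Suc i)) \<longrightarrow>
        prob_space.indep_vars M (\<lambda>_. borel) (\<lambda>i \<omega>. X (ts (Suc i)) \<omega> - X (ts i) \<omega>) {..<n}) \<and>
     (\<forall>s\<ge>0. \<forall>t\<ge>0. distr M borel (\<lambda>\<omega>. X (s + t) \<omega> - X s \<omega>) = distr M borel (X t)) \<and>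
     (\<forall>t\<ge>0. \<forall>e>0. ((\<lambda>s. measure M {\<omega> \<in> space M. \<bar>X s \<omega> - X t \<omega>\<bar> > e}) \<longlongrightarrow> 0)
        (at t within {0..})) \<and>
     (AE \<omega> in M. \<forall>t\<ge>0. continuous (at_right t) (\<lambda>s. X s \<omega>) \<and>
        (t > 0 \<longrightarrow> (\<exists>l. ((\<lambda>s. X s \<omega>) \<longlongrightarrow> l) (at_left t))))"

definition conv_in_distr_at_top :: "(real \<Rightarrow> real measure) \<Rightarrow> real measure \<Rightarrow> bool" where
  "conv_in_distr_at_top \<mu>t \<mu> \<longleftrightarrow>
     (\<forall>x. isCont (cdf \<mu>) x \<longrightarrow> ((\<lambda>t. cdf (\<mu>t t) x) \<longlongrightarrow> cdf \<mu> x) at_top)"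

end

theory Submission
  imports Defs
begin


lemma lap_bound:
  assumes "real_distribution \<mu>" "AE x in \<mu>. 0 \<le> x"
  shows "integrable \<mu> (\<lambda>x. exp (- real k * x))"
    "0 \<le> (\<integral>x. exp (- real k * x) \<partial>\<mu>)" "(\<integral>x. exp (- real k * x) \<partial>\<mu>) \<le> 1"
proof -
  interpret real_distribution \<mu> by fact
  have ae: "AE x in \<mu>. norm (exp (- real k * x)) \<le> 1"
    using assms(2) by eventually_elim (simp add: mult_nonneg_nonneg)
  show i: "integrable \<mu> (\<lambda>x. exp (- real k * x))"
    by (rule integrable_const_bound[OF ae]) simp
  show "0 \<le> (\<integral>x. exp (- real k * x) \<partial>\<mu>)" by simp
  have "(\<integral>x. exp (- real k * x) \<partial>\<mu>) \<le> (\<integral>x. 1 \<partial>\<mu>)"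
    using ae by (intro integral_mono_AE i) auto
  then show "(\<integral>x. exp (- real k * x) \<partial>\<mu>) \<le> 1" using prob_space space_eq_univ by simp
qed

lemma char_exp_series:
  assumes "real_distribution \<mu>" "AE x in \<mu>. 0 \<le> x"
  shows "(\<lambda>k. (\<i>*complex_of_real \<theta>)^k / fact k * complex_of_real (\<integral>x. exp (- real k * x) \<partial>\<mu>))
     sums (CLINT x|\<mu>. iexp (\<theta> * exp (- x)))"
proof -
  interpret real_distribution \<mu> by fact
  define f where "f k x = (\<i>*complex_of_real \<theta>)^k / fact k * complex_of_real (exp (- real k * x))" for k x
  have pt: "(\<lambda>k. f k x) sums iexp (\<theta> * exp (- x))" for x
  proof -
    have "(\<lambda>k. (\<i>*complex_of_real (\<theta> * exp (-x)))^k /\<^sub>R fact k) sums exp (\<i>*complex_of_real (\<theta> * exp (-x)))"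
      by (rule exp_converges)
    moreover have "(\<i>*complex_of_real (\<theta> * exp (-x)))^k /\<^sub>R fact k = f k x" for k
    proof -
      have "exp (- real k * x) = exp (-x) ^ k" by (subst exp_of_nat_mult[symmetric]) simp
      then show ?thesis unfolding f_def by (simp add: power_mult_distrib scaleR_conv_of_real field_simps)
    qed
    ultimately show ?thesis by simp
  qed
  have int: "integrable \<mu> (f k)" for k
    unfolding f_def using lap_bound(1)[OF assms, of k] by simp
  have intf: "integral\<^sup>L \<mu> (f k) = (\<i>*complex_of_real \<theta>)^k / fact k * complex_of_real (\<integral>x. exp (- real k * x) \<partial>\<mu>)" for k
    unfolding f_def by simp
  have nint: "(\<integral>x. norm (f k x) \<partial>\<mu>) \<le> \<bar>\<theta>\<bar>^k / fact k" for k
  proof -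
    have "(\<integral>x. norm (f k x) \<partial>\<mu>) = \<bar>\<theta>\<bar>^k / fact k * (\<integral>x. exp (- real k * x) \<partial>\<mu>)"
      unfolding f_def by (simp add: norm_mult norm_divide norm_power)
    also have "\<dots> \<le> \<bar>\<theta>\<bar>^k / fact k * 1"
      using lap_bound[OF assms, of k] by (intro mult_left_mono) auto
    finally show ?thesis by simp
  qed
  have summ: "summable (\<lambda>k. (\<integral>x. norm (f k x) \<partial>\<mu>))"
  proof (rule summable_comparison_test[of _ "\<lambda>k. \<bar>\<theta>\<bar>^k / fact k"])
    show "\<exists>N. \<forall>n\<ge>N. norm (\<integral>x. norm (f n x) \<partial>\<mu>) \<le> \<bar>\<theta>\<bar>^n / fact n"
      using nint by (auto intro!: exI[of _ 0])
    show "summable (\<lambda>k. \<bar>\<theta>\<bar>^k / fact k)"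
      using summable_exp[of "\<bar>\<theta>\<bar>"] by (simp add: field_simps)
  qed
  have ae: "AE x in \<mu>. summable (\<lambda>k. norm (f k x))"
  proof (intro AE_I2)
    fix x
    have eq: "f k x = (\<i>*complex_of_real (\<theta> * exp (-x)))^k /\<^sub>R fact k" for k
    proof -
      have "exp (- real k * x) = exp (-x) ^ k" by (subst exp_of_nat_mult[symmetric]) simp
      then show ?thesis unfolding f_def by (simp add: power_mult_distrib scaleR_conv_of_real field_simps)
    qed
    show "summable (\<lambda>k. norm (f k x))" unfolding eq by (rule summable_norm_exp)
  qed
  have "(\<lambda>k. integral\<^sup>L \<mu> (f k)) sums (\<integral>x. (\<Sum>k. f k x) \<partial>\<mu>)"
    by (rule sums_integral[OF int ae summ])
  moreover have "(\<integral>x. (\<Sum>k. f k x) \<partial>\<mu>) = (CLINT x|\<mu>. iexp (\<theta> * exp (- x)))"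
    using pt by (simp add: sums_iff)
  ultimately show ?thesis using intf by simp
qed

lemma laplace_weak_conv:
  fixes \<mu> :: "nat \<Rightarrow> real measure" and \<nu> :: "real measure"
  assumes \<mu>: "\<And>n. real_distribution (\<mu> n)" and \<nu>: "real_distribution \<nu>"
    and pos\<mu>: "\<And>n. AE x in \<mu> n. 0 \<le> x" and pos\<nu>: "AE x in \<nu>. 0 \<le> x"
    and lim: "\<And>k::nat. (\<lambda>n. \<integral>x. exp (- real k * x) \<partial>\<mu> n) \<longlonglongrightarrow> (\<integral>x. exp (- real k * x) \<partial>\<nu>)"
  shows "weak_conv_m \<mu> \<nu>"
proof -
  define E where "E n = distr (\<mu> n) borel (\<lambda>x. exp (- x))" for n
  define E' where "E' = distr \<nu> borel (\<lambda>x. exp (- x))"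
  have meas: "(\<lambda>x::real. exp (- x)) \<in> borel_measurable borel" by simp
  have rdE: "real_distribution (E n)" for n
  proof -
    interpret real_distribution "\<mu> n" by (rule \<mu>)
    have "(\<lambda>x::real. exp (- x)) \<in> borel_measurable (\<mu> n)"
      using measurable_cong_sets[OF events_eq_borel refl] meas by blast
    then show ?thesis unfolding E_def by (rule real_distribution_distr)
  qed
  have rdE': "real_distribution E'"
  proof -
    interpret real_distribution "\<nu>" by (rule \<nu>)
    have "(\<lambda>x::real. exp (- x)) \<in> borel_measurable \<nu>"
      using measurable_cong_sets[OF events_eq_borel refl] meas by blast
    then show ?thesis unfolding E'_def by (rule real_distribution_distr)
  qed
  have charE: "char (E n) \<theta> = (CLINT x|\<mu> n. iexp (\<theta> * exp (- x)))" for n \<theta>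
  proof -
    interpret real_distribution "\<mu> n" by (rule \<mu>)
    have "(\<lambda>x::real. exp (- x)) \<in> borel_measurable (\<mu> n)"
      using measurable_cong_sets[OF events_eq_borel refl] meas by blast
    then show ?thesis unfolding char_def E_def by (subst integral_distr) auto
  qed
  have charE': "char E' \<theta> = (CLINT x|\<nu>. iexp (\<theta> * exp (- x)))" for \<theta>
  proof -
    interpret real_distribution "\<nu>" by (rule \<nu>)
    have "(\<lambda>x::real. exp (- x)) \<in> borel_measurable \<nu>"
      using measurable_cong_sets[OF events_eq_borel refl] meas by blast
    then show ?thesis unfolding char_def E'_def by (subst integral_distr) auto
  qed
  have cc: "(\<lambda>n. char (E n) \<theta>) \<longlonglongrightarrow> char E' \<theta>" for \<theta>
  proof -
    define a where "a k n = (\<i>*complex_of_real \<theta>)^k / fact k * complex_of_real (\<integral>x. exp (- real k * x) \<partial>\<mu> n)" for k n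
    define b where "b k = (\<i>*complex_of_real \<theta>)^k / fact k * complex_of_real (\<integral>x. exp (- real k * x) \<partial>\<nu>)" for k
    have "eventually (\<lambda>n. summable (\<lambda>k. norm (a k n))) sequentially \<and>
           summable (\<lambda>n. norm (b n)) \<and>
           ((\<lambda>n. suminf (\<lambda>k. a k n)) \<longlongrightarrow> suminf b) sequentially"
    proof (rule tannerys_theorem[where M = "\<lambda>k. \<bar>\<theta>\<bar>^k / fact k"])
      show "((\<lambda>n. a k n) \<longlongrightarrow> b k) sequentially" for k
        unfolding a_def b_def by (intro tendsto_intros lim)
      show "\<forall>\<^sub>F (k, n) in at_top \<times>\<^sub>F sequentially. norm (a k n) \<le> \<bar>\<theta>\<bar>^k / fact k"
      proof (intro always_eventually allI, clarify)
        fix k n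
        have "norm (a k n) = \<bar>\<theta>\<bar>^k / fact k * \<bar>\<integral>x. exp (- real k * x) \<partial>\<mu> n\<bar>"
          unfolding a_def by (simp add: norm_mult norm_divide norm_power)
        also have "\<dots> \<le> \<bar>\<theta>\<bar>^k / fact k * 1"
          using lap_bound[OF \<mu>[of n] pos\<mu>[of n], of k] by (intro mult_left_mono) auto
        finally show "norm (a k n) \<le> \<bar>\<theta>\<bar>^k / fact k" by simp
      qed
      show "summable (\<lambda>k. \<bar>\<theta>\<bar>^k / fact k)"
        using summable_exp[of "\<bar>\<theta>\<bar>"] by (simp add: field_simps)
    qed simp
    then have "(\<lambda>n. suminf (\<lambda>k. a k n)) \<longlonglongrightarrow> suminf b" by blast
    moreover have "suminf (\<lambda>k. a k n) = char (E n) \<theta>" for n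
      unfolding charE a_def using char_exp_series[OF \<mu> pos\<mu>, of \<theta> n] by (simp add: sums_iff)
    moreover have "suminf b = char E' \<theta>"
      unfolding charE' b_def using char_exp_series[OF \<nu> pos\<nu>, of \<theta>] by (simp add: sums_iff)
    ultimately show ?thesis by simp
  qed
  have wE: "weak_conv_m E E'"
    by (rule levy_continuity[OF rdE rdE' cc])
  show ?thesis
  proof (rule integral_bdd_continuous_conv_imp_weak_conv[OF \<mu> \<nu>])
    fix f :: "real \<Rightarrow> real"
    assume fc: "\<And>x. isCont f x" and fb: "\<And>x. \<bar>f x\<bar> \<le> 1"
    have fm[measurable]: "f \<in> borel_measurable borel"
      using fc by (auto intro!: borel_measurable_continuous_onI continuous_at_imp_continuous_on)
    define g where "g y = (if 0 < y then f (- ln y) else 0)" for y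
    have gm[measurable]: "g \<in> borel_measurable borel" unfolding g_def by measurable
    have gb: "norm (g y) \<le> 1" for y unfolding g_def using fb by auto
    have cont_pos: "isCont g y" if "0 < y" for y
    proof -
      have "continuous_on {0<..} (\<lambda>y. f (- ln y))"
        by (intro continuous_at_imp_continuous_on ballI continuous_intros isCont_o2[OF _ fc]) auto
      then have "continuous_on {0<..} g"
        by (rule continuous_on_cong[THEN iffD1, rotated 2]) (auto simp: g_def)
      then show ?thesis using that by (simp add: continuous_on_eq_continuous_at)
    qed
    have cont_neg: "isCont g y" if "y < 0" for y
    proof -
      have "continuous_on {..<0} (\<lambda>y::real. 0::real)" by simp
      then have "continuous_on {..<0} g"
        by (rule continuous_on_cong[THEN iffD1, rotated 2]) (auto simp: g_def)
      then show ?thesis using that by (simp add: continuous_on_eq_continuous_at)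
    qed
    have sub: "{x. \<not> isCont g x} \<subseteq> {0}"
      using cont_pos cont_neg by (auto simp: not_less) (metis linorder_neqE_linordered_idom)
    have "emeasure E' {x. \<not> isCont g x} \<le> emeasure E' {0}"
      by (rule emeasure_mono[OF sub]) (simp add: E'_def)
    also have "emeasure E' {0} = 0"
    proof -
      have "(\<lambda>x::real. exp (- x)) \<in> borel_measurable \<nu>"
        using measurable_cong_sets[OF real_distribution.events_eq_borel[OF \<nu>] refl] meas by blast
      moreover have "(\<lambda>x::real. exp (- x)) -` {0} = {}" by auto
      ultimately show ?thesis unfolding E'_def by (subst emeasure_distr) auto
    qed
    finally have dn: "emeasure E' {x. \<not> isCont g x} = 0" by simp
    have "(\<lambda>n. integral\<^sup>L (E n) g) \<longlonglongrightarrow> integral\<^sup>L E' g"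
      by (rule weak_conv_imp_bdd_ae_continuous_conv[OF rdE rdE' wE dn gb gm])
    moreover have "integral\<^sup>L (E n) g = integral\<^sup>L (\<mu> n) f" for n
    proof -
      interpret real_distribution "\<mu> n" by (rule \<mu>)
      have "(\<lambda>x::real. exp (- x)) \<in> borel_measurable (\<mu> n)"
        using measurable_cong_sets[OF events_eq_borel refl] meas by blast
      then show ?thesis unfolding E_def by (subst integral_distr) (auto simp: g_def)
    qed
    moreover have "integral\<^sup>L E' g = integral\<^sup>L \<nu> f"
    proof -
      interpret real_distribution "\<nu>" by (rule \<nu>)
      have "(\<lambda>x::real. exp (- x)) \<in> borel_measurable \<nu>"
        using measurable_cong_sets[OF events_eq_borel refl] meas by blast
      then show ?thesis unfolding E'_def by (subst integral_distr) (auto simp: g_def)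
    qed
    ultimately show "(\<lambda>n. integral\<^sup>L (\<mu> n) f) \<longlonglongrightarrow> integral\<^sup>L \<nu> f" by simp
  qed
qed



lemma laplace_nonneg:
  fixes Z :: "'a \<Rightarrow> real"
  assumes P: "prob_space M" and Zm[measurable]: "Z \<in> borel_measurable M"
    and pos: "\<And>u. 0 \<le> u \<Longrightarrow> 0 < prob_space.expectation M (\<lambda>\<omega>. exp (- u * Z \<omega>))"
    and le1: "\<And>u. 0 \<le> u \<Longrightarrow> prob_space.expectation M (\<lambda>\<omega>. exp (- u * Z \<omega>)) \<le> 1"
  shows "AE \<omega> in M. 0 \<le> Z \<omega>"
proof -
  interpret prob_space M by fact
  have zero: "prob {\<omega>\<in>space M. Z \<omega> < - inverse (real (Suc m))} = 0" for m
  proof (rule ccontr)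
    define \<epsilon> where "\<epsilon> = inverse (real (Suc m))"
    define A where "A = {\<omega>\<in>space M. Z \<omega> < - \<epsilon>}"
    define p where "p = prob A"
    assume "prob {\<omega>\<in>space M. Z \<omega> < - inverse (real (Suc m))} \<noteq> 0"
    then have p0: "0 < p" unfolding p_def A_def \<epsilon>_def using measure_nonneg[of M] by (simp add: less_le)
    have p1: "p \<le> 1" unfolding p_def by simp
    have e0: "0 < \<epsilon>" unfolding \<epsilon>_def by simp
    define u where "u = (1 - ln p) / \<epsilon>"
    have u0: "0 \<le> u" unfolding u_def using p0 p1 e0 ln_le_zero_iff[of p] by (intro divide_nonneg_pos) linarith+
    have int: "integrable M (\<lambda>\<omega>. exp (- u * Z \<omega>))"
      using pos[OF u0] not_integrable_integral_eq by fastforce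
    have Am[measurable]: "A \<in> sets M" unfolding A_def by measurable
    have "(\<integral>\<omega>. indicator A \<omega> * exp (u * \<epsilon>) \<partial>M) \<le> (\<integral>\<omega>. exp (- u * Z \<omega>) \<partial>M)"
    proof (rule integral_mono[OF _ int])
      show "integrable M (\<lambda>\<omega>. indicator A \<omega> * exp (u * \<epsilon>))"
        by (intro integrable_mult_left integrable_real_indicator) (auto simp: Am emeasure_eq_measure)
      fix \<omega> assume "\<omega> \<in> space M"
      show "indicator A \<omega> * exp (u * \<epsilon>) \<le> exp (- u * Z \<omega>)"
      proof (cases "\<omega> \<in> A")
        case True
        then have "\<epsilon> \<le> - Z \<omega>" unfolding A_def by simp
        then have "u * \<epsilon> \<le> u * (- Z \<omega>)" using u0 by (rule mult_left_mono)
        then have "u * \<epsilon> \<le> - u * Z \<omega>" by simp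
        then show ?thesis using True by simp
      qed simp
    qed
    moreover have "(\<integral>\<omega>. indicator A \<omega> * exp (u * \<epsilon>) \<partial>M) = p * exp (u * \<epsilon>)"
      unfolding p_def by simp
    moreover have "p * exp (u * \<epsilon>) = exp 1"
      unfolding u_def using e0 p0 by (simp add: exp_diff)
    ultimately have "exp 1 \<le> (\<integral>\<omega>. exp (- u * Z \<omega>) \<partial>M)" by simp
    with le1[OF u0] exp_gt_one[of "1::real"] show False by linarith
  qed
  have "AE \<omega> in M. \<forall>m. \<omega> \<notin> {\<omega>\<in>space M. Z \<omega> < - inverse (real (Suc m))}"
    unfolding AE_all_countable
  proof
    fix m
    show "AE \<omega> in M. \<omega> \<notin> {\<omega>\<in>space M. Z \<omega> < - inverse (real (Suc m))}"
      using zero[of m] by (subst (asm) prob_eq_0) auto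
  qed
  then show ?thesis
  proof (rule AE_mp, intro AE_I2 impI)
    fix \<omega> assume \<omega>: "\<omega> \<in> space M" and H: "\<forall>m. \<omega> \<notin> {\<omega>\<in>space M. Z \<omega> < - inverse (real (Suc m))}"
    show "0 \<le> Z \<omega>"
    proof (rule ccontr)
      assume "\<not> 0 \<le> Z \<omega>"
      then obtain n where "inverse (real (Suc n)) < - Z \<omega>"
        using reals_Archimedean[of "- Z \<omega>"] by auto
      then have "Z \<omega> < - inverse (real (Suc n))" by linarith
      with H \<omega> show False by blast
    qed
  qed
qed


theorem mainTheorem1:
  fixes \<alpha> lam :: real
    and M :: "'a measure" and X :: "real \<Rightarrow> 'a \<Rightarrow> real"
    and N :: "'b measure" and S :: "'b \<Rightarrow> real"
  assumes "0 < \<alpha>" and "\<alpha> < 1" and "0 < lam"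
    and "levy_process M X"
    and "\<And>u t. 0 \<le> u \<Longrightarrow> 0 \<le> t \<Longrightarrow>
           prob_space.expectation M (\<lambda>\<omega>. exp (- u * X t \<omega>)) = (lam / (lam + u powr \<alpha>)) powr t"
    and "prob_space N" and "S \<in> borel_measurable N"
    and "AE \<omega> in N. S \<omega> > 0"
    and "\<And>u. 0 \<le> u \<Longrightarrow> prob_space.expectation N (\<lambda>\<omega>. exp (- u * S \<omega>)) = exp (- (u powr \<alpha>))"
  shows "conv_in_distr_at_top
           (\<lambda>t. distr M borel (\<lambda>\<omega>. lam powr (1 / \<alpha>) * X t \<omega> / t powr (1 / \<alpha>)))
           (distr N borel S)"
proof -
  from assms(4) have Mps: "prob_space M" and Xm: "\<And>t. 0 \<le> t \<Longrightarrow> X t \<in> borel_measurable M"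
    unfolding levy_process_def by auto
  interpret M: prob_space M by fact
  interpret N: prob_space N by fact
  note Sm[measurable] = assms(7)
  define c where "c = lam powr (1 / \<alpha>)"
  have c0: "0 < c" unfolding c_def using assms(3) by simp
  define Y where "Y t \<omega> = c * X t \<omega> / t powr (1 / \<alpha>)" for t \<omega>
  have Yeq: "Y t = (\<lambda>\<omega>. lam powr (1 / \<alpha>) * X t \<omega> / t powr (1 / \<alpha>))" for t
    by (simp add: Y_def c_def fun_eq_iff)
  have Ym: "Y t \<in> borel_measurable M" if "0 \<le> t" for t
  proof -
    note [measurable] = Xm[OF that]
    show ?thesis unfolding Y_def by measurable
  qed
  have Xpos: "AE \<omega> in M. 0 \<le> X t \<omega>" if t: "0 < t" for t
  proof (rule laplace_nonneg[OF Mps Xm])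
    show "0 \<le> t" using t by simp
    fix u :: real assume u: "0 \<le> u"
    have b0: "0 < lam / (lam + u powr \<alpha>)" using assms(3) by (simp add: add_pos_nonneg)
    have b1: "lam / (lam + u powr \<alpha>) \<le> 1"
    proof -
      have "0 < lam + u powr \<alpha>" using assms(3) powr_ge_zero[of u \<alpha>] by linarith
      then show ?thesis using powr_ge_zero[of u \<alpha>] by (simp add: field_simps)
    qed
    have e: "M.expectation (\<lambda>\<omega>. exp (- u * X t \<omega>)) = (lam / (lam + u powr \<alpha>)) powr t"
      using assms(5)[OF u, of t] t by simp
    have "0 < (lam / (lam + u powr \<alpha>)) powr t" using b0 by (metis powr_gt_zero less_irrefl)
    then show "0 < M.expectation (\<lambda>\<omega>. exp (- u * X t \<omega>))" unfolding e .
    have "(lam / (lam + u powr \<alpha>)) powr t \<le> 1" using b0 b1 t by (intro powr_le1) (simp_all only: abs_of_pos less_imp_le)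
    then show "M.expectation (\<lambda>\<omega>. exp (- u * X t \<omega>)) \<le> 1" unfolding e .
  qed
  have lapY: "(\<integral>x. exp (- real k * x) \<partial>distr M borel (Y t)) = inverse ((1 + real k powr \<alpha> / t) powr t)"
    if t: "0 < t" for t k
  proof -
    define u where "u = real k * c / t powr (1 / \<alpha>)"
    have u0: "0 \<le> u" unfolding u_def using c0 t by simp
    have "(\<integral>x. exp (- real k * x) \<partial>distr M borel (Y t)) = (\<integral>\<omega>. exp (- real k * Y t \<omega>) \<partial>M)"
      using Ym[of t] t by (subst integral_distr) auto
    also have "\<dots> = (\<integral>\<omega>. exp (- u * X t \<omega>) \<partial>M)"
      unfolding Y_def u_def by (simp add: field_simps)
    also have "\<dots> = (lam / (lam + u powr \<alpha>)) powr t" using assms(5)[OF u0, of t] t by simp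
    also have "u powr \<alpha> = real k powr \<alpha> * lam / t"
    proof -
      have "u powr \<alpha> = (real k powr \<alpha> * c powr \<alpha>) / (t powr (1/\<alpha>)) powr \<alpha>"
        unfolding u_def using c0 t by (simp add: powr_divide powr_mult)
      also have "c powr \<alpha> = lam" unfolding c_def using assms(1,3) by (simp add: powr_powr)
      also have "(t powr (1/\<alpha>)) powr \<alpha> = t" using assms(1) t by (simp add: powr_powr)
      finally show ?thesis by simp
    qed
    also have "lam / (lam + real k powr \<alpha> * lam / t) = 1 / (1 + real k powr \<alpha> / t)"
    proof -
      have p: "0 < t + real k powr \<alpha>" using t powr_ge_zero[of "real k" \<alpha>] by linarith
      have "lam + real k powr \<alpha> * lam / t = lam * (t + real k powr \<alpha>) / t"
        using t by (simp add: field_simps)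
      moreover have "1 + real k powr \<alpha> / t = (t + real k powr \<alpha>) / t"
        using t by (simp add: field_simps)
      ultimately show ?thesis using assms(3) t p by simp
    qed
    also have "(1 / (1 + real k powr \<alpha> / t)) powr t = inverse ((1 + real k powr \<alpha> / t) powr t)"
      using t by (simp add: powr_divide add_pos_nonneg inverse_eq_divide)
    finally show ?thesis .
  qed
  have lapS: "(\<integral>x. exp (- real k * x) \<partial>distr N borel S) = exp (- (real k powr \<alpha>))" for k
  proof -
    have "(\<integral>x. exp (- real k * x) \<partial>distr N borel S) = (\<integral>\<omega>. exp (- real k * S \<omega>) \<partial>N)"
      by (subst integral_distr) auto
    also have "\<dots> = exp (- (real k powr \<alpha>))" using assms(9)[of "real k"] by simp
    finally show ?thesis .
  qed
  have limk: "((\<lambda>t. inverse ((1 + real k powr \<alpha> / t) powr t)) \<longlongrightarrow> exp (- (real k powr \<alpha>))) at_top" for k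
  proof -
    have "((\<lambda>t. inverse ((1 + real k powr \<alpha> / t) powr t)) \<longlongrightarrow> inverse (exp (real k powr \<alpha>))) at_top"
      by (intro tendsto_inverse tendsto_exp_limit_at_top) simp
    then show ?thesis by (simp add: exp_minus)
  qed
  have rdS: "real_distribution (distr N borel S)" by (rule N.real_distribution_distr) simp
  have posS: "AE x in distr N borel S. 0 \<le> x"
    using assms(8) by (subst AE_distr_iff) (auto elim: eventually_mono)
  show ?thesis unfolding conv_in_distr_at_top_def
  proof (intro allI impI)
    fix x assume cont: "isCont (cdf (distr N borel S)) x"
    show "((\<lambda>t. cdf (distr M borel (\<lambda>\<omega>. lam powr (1 / \<alpha>) * X t \<omega> / t powr (1 / \<alpha>))) x)
          \<longlongrightarrow> cdf (distr N borel S) x) at_top"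
    proof (rule tendsto_at_topI_sequentially)
      fix s :: "nat \<Rightarrow> real" assume s: "filterlim s at_top sequentially"
      define s' where "s' n = max (s n) 1" for n
      have s'1: "1 \<le> s' n" for n unfolding s'_def by simp
      have s'lim: "filterlim s' at_top sequentially"
        by (rule filterlim_at_top_mono[OF s]) (simp add: s'_def)
      have ev: "eventually (\<lambda>n. s' n = s n) sequentially"
        using s unfolding filterlim_at_top by (auto simp: s'_def elim!: allE[of _ 1] eventually_mono)
      have w: "weak_conv_m (\<lambda>n. distr M borel (Y (s' n))) (distr N borel S)"
      proof (rule laplace_weak_conv[OF _ rdS _ posS])
        fix n
        show "real_distribution (distr M borel (Y (s' n)))"
          using Ym[of "s' n"] s'1[of n] by (intro M.real_distribution_distr) auto
        have ym: "Y (s' n) \<in> borel_measurable M" using Ym[of "s' n"] s'1[of n] by simp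
        show "AE x in distr M borel (Y (s' n)). 0 \<le> x"
        proof (subst AE_distr_iff[OF ym])
          show "AE \<omega> in M. 0 \<le> Y (s' n) \<omega>"
            using Xpos[of "s' n"] s'1[of n] c0 by (auto simp: Y_def elim!: eventually_mono)
        qed simp
      next
        fix k :: nat
        have "(\<lambda>n. inverse ((1 + real k powr \<alpha> / s' n) powr s' n)) \<longlonglongrightarrow> exp (- (real k powr \<alpha>))"
          by (rule filterlim_compose[OF limk s'lim])
        moreover have "(\<integral>x. exp (- real k * x) \<partial>distr M borel (Y (s' n))) = inverse ((1 + real k powr \<alpha> / s' n) powr s' n)" for n
          using lapY[of "s' n" k] s'1[of n] by simp
        ultimately show "(\<lambda>n. \<integral>x. exp (- real k * x) \<partial>distr M borel (Y (s' n))) \<longlonglongrightarrow>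
            (\<integral>x. exp (- real k * x) \<partial>distr N borel S)"
          using lapS[of k] by simp
      qed
      then have "(\<lambda>n. cdf (distr M borel (Y (s' n))) x) \<longlonglongrightarrow> cdf (distr N borel S) x"
        unfolding weak_conv_m_def weak_conv_def using cont by blast
      then show "(\<lambda>n. cdf (distr M borel (\<lambda>\<omega>. lam powr (1 / \<alpha>) * X (s n) \<omega> / s n powr (1 / \<alpha>))) x)
          \<longlonglongrightarrow> cdf (distr N borel S) x"
        by (rule Lim_transform_eventually) (use ev in \<open>auto simp: Yeq elim!: eventually_mono\<close>)
    qed
  qed
qed

end
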